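(* Let $X$ be a topological space. For every irreducible closed subset $C$ of $X$, let $e_C:\mathcal OX\to[0,\infty]$ map every open $U$ to $1$ if $U\cap C\neq\emptyset$ and to $0$ otherwise. Then $e_C$ is a point-continuous valuation. If $C$ is the closure of $\{x\}$ for some point $x$, then $e_C=\delta_x$.
   Context: A non-empty subset $A$ is irreducible if $A\subseteq B\cup C$ with $B,C$ closed implies $A\subseteq B$ or $A\subseteq C$. A valuation is a map $\mathcal OX\to[0,\infty]$ with value $0$ on $\emptyset$, monotone and modular. It is point-continuous if for every open $U$ and real $r$ with $0\le r<\nu(U)$ there is a finite $A\subseteq U$ with $\nu(V)>r$ for every open $V\supseteq A$. $\delta_x$ is the Dirac valuation: $\delta_x(U)=1$ if $x\in U$, else $0$. *)

theory Defs
  imports "HOL-Analysis.Analysis"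
begin

definition irreducible_in :: "'a topology \<Rightarrow> 'a set \<Rightarrow> bool" where
  "irreducible_in T A \<longleftrightarrow> A \<noteq> {} \<and> A \<subseteq> topspace T \<and>
     (\<forall>B C. closedin T B \<longrightarrow> closedin T C \<longrightarrow> A \<subseteq> B \<union> C \<longrightarrow> A \<subseteq> B \<or> A \<subseteq> C)"

text \<open>A valuation: a map from open sets to [0,\<infinity>], zero on the empty set, monotone, modular.
  Only its values on open sets matter.\<close>
definition valuation :: "'a topology \<Rightarrow> ('a set \<Rightarrow> ennreal) \<Rightarrow> bool" where
  "valuation T \<nu> \<longleftrightarrow> \<nu> {} = 0 \<and>
     (\<forall>U V. openin T U \<longrightarrow> openin T V \<longrightarrow> U \<subseteq> V \<longrightarrow> \<nu> U \<le> \<nu> V) \<and>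
     (\<forall>U V. openin T U \<longrightarrow> openin T V \<longrightarrow> \<nu> (U \<union> V) + \<nu> (U \<inter> V) = \<nu> U + \<nu> V)"

definition point_continuous :: "'a topology \<Rightarrow> ('a set \<Rightarrow> ennreal) \<Rightarrow> bool" where
  "point_continuous T \<nu> \<longleftrightarrow>
     (\<forall>U (r::real). openin T U \<longrightarrow> 0 \<le> r \<longrightarrow> ennreal r < \<nu> U \<longrightarrow>
        (\<exists>A. finite A \<and> A \<subseteq> U \<and> (\<forall>V. openin T V \<longrightarrow> A \<subseteq> V \<longrightarrow> ennreal r < \<nu> V)))"

definition dirac_val :: "'a \<Rightarrow> 'a set \<Rightarrow> ennreal" where
  "dirac_val x U = (if x \<in> U then 1 else 0)"

definition e_val :: "'a set \<Rightarrow> 'a set \<Rightarrow> ennreal" where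
  "e_val C U = (if U \<inter> C \<noteq> {} then 1 else 0)"

end

theory Submission
  imports Defs
begin

theorem lemma4p1:
  fixes T :: "'a topology" and C :: "'a set"
  assumes "closedin T C" and "irreducible_in T C"
  shows "valuation T (e_val C) \<and> point_continuous T (e_val C) \<and>
         (\<forall>x \<in> topspace T. C = T closure_of {x} \<longrightarrow>
            (\<forall>U. openin T U \<longrightarrow> e_val C U = dirac_val x U))"
proof (intro conjI)
  have CT: "C \<subseteq> topspace T" using assms(1) closedin_subset by blast
  have key: "U \<inter> V \<inter> C \<noteq> {}" if "openin T U" "openin T V" "U \<inter> C \<noteq> {}" "V \<inter> C \<noteq> {}" for U V
  proof
    assume h: "U \<inter> V \<inter> C = {}"
    have c1: "closedin T (topspace T - U)" "closedin T (topspace T - V)"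
      using that by auto
    have "C \<subseteq> (topspace T - U) \<union> (topspace T - V)" using h CT by blast
    then have "C \<subseteq> topspace T - U \<or> C \<subseteq> topspace T - V"
      using assms(2) c1 unfolding irreducible_in_def by blast
    then show False using that(3,4) by blast
  qed
  show "valuation T (e_val C)"
    unfolding valuation_def
  proof (intro conjI allI impI)
    fix U V assume "openin T U" "openin T V" "U \<subseteq> V"
    then show "e_val C U \<le> e_val C V" unfolding e_val_def by auto
  next
    fix U V assume o: "openin T U" "openin T V"
    show "e_val C (U \<union> V) + e_val C (U \<inter> V) = e_val C U + e_val C V"
    proof (cases "U \<inter> C \<noteq> {} \<and> V \<inter> C \<noteq> {}")
      case True
      then have "U \<inter> V \<inter> C \<noteq> {}" using key o by blast
      then show ?thesis using True unfolding e_val_def by (auto simp: Int_Un_distrib2)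
    next
      case False
      then show ?thesis unfolding e_val_def by (auto simp: Int_Un_distrib2 Int_assoc)
    qed
  qed (simp add: e_val_def)
  show "point_continuous T (e_val C)"
    unfolding point_continuous_def
  proof (intro allI impI)
    fix U and r :: real
    assume "openin T U" "0 \<le> r" "ennreal r < e_val C U"
    then have r1: "ennreal r < 1" and ne: "U \<inter> C \<noteq> {}"
      unfolding e_val_def by (auto split: if_splits)
    then obtain a where a: "a \<in> U" "a \<in> C" by blast
    show "\<exists>A. finite A \<and> A \<subseteq> U \<and> (\<forall>V. openin T V \<longrightarrow> A \<subseteq> V \<longrightarrow> ennreal r < e_val C V)"
      using a r1 by (intro exI[of _ "{a}"]) (auto simp: e_val_def)
  qed
  show "\<forall>x \<in> topspace T. C = T closure_of {x} \<longrightarrow>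
            (\<forall>U. openin T U \<longrightarrow> e_val C U = dirac_val x U)"
  proof (intro ballI impI allI)
    fix x U assume "x \<in> topspace T" "C = T closure_of {x}" "openin T U"
    then have "U \<inter> C = {} \<longleftrightarrow> U \<inter> {x} = {}" using openin_Int_closure_of_eq_empty by metis
    then show "e_val C U = dirac_val x U" unfolding e_val_def dirac_val_def by auto
  qed
qed

end
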